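(* Let $f\in\mathcal{A}_{d,n}$, $b\in\mathcal{A}_{d,m}$, $a\in\mathcal{A}_{e,n+m}$, and let $\sigma$ be a split of $[n+m]$ for which $b\cdot_\sigma f$ is defined (i.e. $\sigma$ consists of an $m$-element subset and its $n$-element complement). Then there exist finitely many $g_1,\dots,g_s\in\mathcal{A}_{e,n}$ and $h_1,\dots,h_s\in\mathcal{A}_{d+e,m}$ such that $a*(b\cdot_\sigma f)=\sum_{i=1}^s h_i\cdot_\sigma(g_i*f)$.
   Context: Let $\mathbf{k}$ be a commutative noetherian ring, $r$ a positive integer, and $\mathcal{A}=\bigoplus_{n,d\ge0}\mathcal{A}_{d,n}$ with $\mathcal{A}_{d,n}=(\mathrm{Sym}^d\mathbf{k}^r)^{\otimes n}$. A split $\sigma$ of $[p+q]$ is a subset $\{i_1<\cdots<i_p\}\subseteq[p+q]$ together with its complement $\{j_1<\cdots<j_q\}$; the shuffle product $\cdot_\sigma:\mathcal{A}_{d,p}\otimes\mathcal{A}_{d,q}\to\mathcal{A}_{d,p+q}$ is $(u_1\otimes\cdots\otimes u_p)\cdot_\sigma(v_1\otimes\cdots\otimes v_q)=w_1\otimes\cdots\otimes w_{p+q}$ with $w_{i_k}=u_k$, $w_{j_k}=v_k$, extended bilinearly. The product $*:\mathcal{A}_{d,n}\otimes\mathcal{A}_{e,n}\to\mathcal{A}_{d+e,n}$ is $(u_1\otimes\cdots\otimes u_n)*(v_1\otimes\cdots\otimes v_n)=u_1v_1\otimes\cdots\otimes u_nv_n$. *)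

theory Defs
  imports Main
begin

definition is_ideal :: "'k::comm_ring_1 set \<Rightarrow> bool" where
  "is_ideal I \<longleftrightarrow> 0 \<in> I \<and> (\<forall>x\<in>I. \<forall>y\<in>I. x + y \<in> I) \<and> (\<forall>x\<in>I. \<forall>c. c * x \<in> I)"

definition noetherian_cring :: "'k::comm_ring_1 itself \<Rightarrow> bool" where
  "noetherian_cring _ \<longleftrightarrow>
     (\<forall>C :: nat \<Rightarrow> 'k set. (\<forall>i. is_ideal (C i)) \<and> (\<forall>i. C i \<subseteq> C (Suc i))
        \<longrightarrow> (\<exists>N. \<forall>i\<ge>N. C i = C N))"

text \<open>Monomials of degree d in r variables: a basis of Sym^d k^r.\<close>

definition monomials_deg :: "nat \<Rightarrow> nat \<Rightarrow> (nat \<Rightarrow> nat) set" where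
  "monomials_deg r d = {\<alpha>. (\<forall>i\<ge>r. \<alpha> i = 0) \<and> (\<Sum>i<r. \<alpha> i) = d}"

text \<open>Basis of A_{d,n} = (Sym^d k^r)^{\<otimes>n}: n-tuples of degree-d monomials.\<close>

definition basisA :: "nat \<Rightarrow> nat \<Rightarrow> nat \<Rightarrow> (nat \<Rightarrow> nat) list set" where
  "basisA r d n = {ms. length ms = n \<and> set ms \<subseteq> monomials_deg r d}"

definition Aspace :: "nat \<Rightarrow> nat \<Rightarrow> nat \<Rightarrow> ((nat \<Rightarrow> nat) list \<Rightarrow> 'k::comm_ring_1) set" where
  "Aspace r d n = {x. \<forall>ms. ms \<notin> basisA r d n \<longrightarrow> x ms = 0}"

text \<open>Product *: A_{d,n} x A_{e,n} -> A_{d+e,n}, componentwise multiplication of monomials.\<close>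

definition starA :: "nat \<Rightarrow> nat \<Rightarrow> nat \<Rightarrow> ((nat \<Rightarrow> nat) list \<Rightarrow> 'k::comm_ring_1)
    \<Rightarrow> ((nat \<Rightarrow> nat) list \<Rightarrow> 'k) \<Rightarrow> ((nat \<Rightarrow> nat) list \<Rightarrow> 'k)" where
  "starA r d e x y = (\<lambda>ms. \<Sum>(us, vs) \<in> {(us, vs). us \<in> basisA r d (length ms) \<and>
        vs \<in> basisA r e (length ms) \<and> map2 (\<lambda>u v i. u i + v i) us vs = ms}. x us * y vs)"

text \<open>Split of [p+q] (0-based: {0..<p+q}) given by the p-element set I; the shuffle of
  lists places us at the positions of I (in order) and vs at the complementary positions.\<close>

definition shuffle_list :: "nat set \<Rightarrow> 'a list \<Rightarrow> 'a list \<Rightarrow> 'a list" where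
  "shuffle_list I us vs =
     map (\<lambda>i. if i \<in> I then us ! card {j\<in>I. j < i} else vs ! card {j. j < i \<and> j \<notin> I})
       [0..<length us + length vs]"

definition shuffleA :: "nat \<Rightarrow> nat \<Rightarrow> nat \<Rightarrow> nat \<Rightarrow> nat set
    \<Rightarrow> ((nat \<Rightarrow> nat) list \<Rightarrow> 'k::comm_ring_1) \<Rightarrow> ((nat \<Rightarrow> nat) list \<Rightarrow> 'k)
    \<Rightarrow> ((nat \<Rightarrow> nat) list \<Rightarrow> 'k)" where
  "shuffleA r d p q I x y = (\<lambda>w. \<Sum>(us, vs) \<in> {(us, vs). us \<in> basisA r d p \<and>
        vs \<in> basisA r d q \<and> shuffle_list I us vs = w}. x us * y vs)"

end

theory Submission
  imports Defs "HOL-Library.FuncSet"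
begin

lemma finite_monomials: "finite (monomials_deg r d)"
proof -
  have sub: "(\<lambda>\<alpha>. restrict \<alpha> {..<r}) ` monomials_deg r d \<subseteq> PiE {..<r} (\<lambda>_. {0..d})"
  proof
    fix x assume "x \<in> (\<lambda>\<alpha>. restrict \<alpha> {..<r}) ` monomials_deg r d"
    then obtain \<alpha> where x: "x = restrict \<alpha> {..<r}" and a: "\<alpha> \<in> monomials_deg r d" by auto
    have "\<alpha> i \<le> d" if "i < r" for i
    proof -
      have "\<alpha> i \<le> (\<Sum>j<r. \<alpha> j)" using that by (intro member_le_sum) auto
      thus ?thesis using a by (simp add: monomials_deg_def)
    qed
    thus "x \<in> PiE {..<r} (\<lambda>_. {0..d})" using x by auto
  qed
  have inj: "inj_on (\<lambda>\<alpha>. restrict \<alpha> {..<r}) (monomials_deg r d)"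
  proof (rule inj_onI)
    fix \<alpha> \<beta> assume a: "\<alpha> \<in> monomials_deg r d" "\<beta> \<in> monomials_deg r d"
      and e: "restrict \<alpha> {..<r} = restrict \<beta> {..<r}"
    show "\<alpha> = \<beta>"
    proof
      fix i show "\<alpha> i = \<beta> i"
      proof (cases "i < r")
        case True thus ?thesis using fun_cong[OF e, of i] by simp
      next
        case False thus ?thesis using a by (simp add: monomials_deg_def)
      qed
    qed
  qed
  show ?thesis
    by (rule finite_imageD[OF finite_subset[OF sub] inj]) (simp add: finite_PiE)
qed

lemma finite_basisA: "finite (basisA r d n)"
  using finite_lists_length_eq[OF finite_monomials, of r d n]
  unfolding basisA_def by (simp add: conj_commute)

lemma rank_nth:
  fixes S :: "nat set"
  assumes "finite S" "k < card S"
  shows "card {j\<in>S. j < sorted_list_of_set S ! k} = k"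
proof -
  let ?L = "sorted_list_of_set S"
  have sw: "sorted_wrt (<) ?L" by (rule strict_sorted_list_of_set)
  have len: "length ?L = card S" by simp
  have d: "distinct ?L" by simp
  have "{j\<in>S. j < ?L ! k} = (!) ?L ` {..<k}"
  proof
    show "{j\<in>S. j < ?L ! k} \<subseteq> (!) ?L ` {..<k}"
    proof
      fix j assume j: "j \<in> {j\<in>S. j < ?L ! k}"
      then have "j \<in> set ?L" using assms by simp
      then obtain i where i: "i < length ?L" "?L ! i = j" by (auto simp: in_set_conv_nth)
      have "i < k"
      proof (rule ccontr)
        assume "\<not> i < k"
        then have "k \<le> i" by simp
        then have "?L ! k \<le> ?L ! i"
          using i(1) by (intro sorted_nth_mono) simp_all
        thus False using i j by simp
      qed
      thus "j \<in> (!) ?L ` {..<k}" using i by auto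
    qed
    show "(!) ?L ` {..<k} \<subseteq> {j\<in>S. j < ?L ! k}"
    proof
      fix j assume "j \<in> (!) ?L ` {..<k}"
      then obtain i where i: "i < k" "j = ?L ! i" by auto
      have "?L ! i < ?L ! k" using sw i assms len by (simp add: sorted_wrt_nth_less)
      moreover have "?L ! i \<in> set ?L" using i assms len by (intro nth_mem) simp
      then have "?L ! i \<in> S" using assms by simp
      ultimately show "j \<in> {j\<in>S. j < ?L ! k}" using i by simp
    qed
  qed
  moreover have "inj_on ((!) ?L) {..<k}"
    using d assms len by (auto simp: inj_on_def nth_eq_iff_index_eq)
  ultimately show ?thesis by (simp add: card_image)
qed

lemma rank_lt:
  fixes S :: "nat set"
  assumes "finite S" "i \<in> S"
  shows "card {j\<in>S. j < i} < card S"
  using assms by (intro psubset_card_mono) auto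

lemma sum_nth_distinct:
  assumes "distinct ps"
  shows "(\<Sum>i<length ps. F (ps ! i)) = (\<Sum>p\<in>set ps. F p)"
proof -
  have inj: "inj_on ((!) ps) {..<length ps}" using assms by (auto simp: inj_on_def nth_eq_iff_index_eq)
  have img: "(!) ps ` {..<length ps} = set ps" by (auto simp: in_set_conv_nth)
  have "(\<Sum>p\<in>set ps. F p) = (\<Sum>p\<in>(!) ps ` {..<length ps}. F p)" by (simp only: img)
  also have "\<dots> = (\<Sum>i<length ps. F (ps ! i))" by (rule sum.reindex_cong[OF inj refl refl])
  finally show ?thesis by simp
qed
definition piI :: "nat set \<Rightarrow> 'a list \<Rightarrow> 'a list" where
  "piI I w = map ((!) w) (sorted_list_of_set I)"
definition piC :: "nat set \<Rightarrow> nat \<Rightarrow> 'a list \<Rightarrow> 'a list" where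
  "piC I N w = map ((!) w) (sorted_list_of_set ({0..<N} - I))"

context
  fixes I :: "nat set" and m n :: nat
  assumes hI1: "I \<subseteq> {0..<n+m}" and hI2: "card I = m"
begin

lemma finI: "finite I" using hI1 finite_subset by blast

lemma cardC: "card ({0..<n+m} - I) = n"
  using hI1 hI2 finI by (simp add: card_Diff_subset)


lemma lenLI: "length (sorted_list_of_set I) = m" using hI2 by simp
lemma lenLC: "length (sorted_list_of_set ({0..<n+m} - I)) = n" using cardC by simp

lemma LI_mem: "k < m \<Longrightarrow> sorted_list_of_set I ! k \<in> I"
  using lenLI finI by (metis nth_mem set_sorted_list_of_set)
lemma LC_mem: "k < n \<Longrightarrow> sorted_list_of_set ({0..<n+m} - I) ! k \<in> {0..<n+m} - I"
  using lenLC by (metis finite_Diff finite_atLeastLessThan nth_mem set_sorted_list_of_set)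

lemma len_piI[simp]: "length (piI I w) = m" by (simp add: piI_def lenLI hI2)
lemma len_piC[simp]: "length (piC I (n+m) w) = n" by (simp add: piC_def lenLC cardC)

lemma cover:
  assumes "i < n+m"
  shows "(\<exists>k<m. i = sorted_list_of_set I ! k) \<or> (\<exists>k<n. i = sorted_list_of_set ({0..<n+m} - I) ! k)"
proof (cases "i \<in> I")
  case True
  then have "i \<in> set (sorted_list_of_set I)" using finI by simp
  then show ?thesis using lenLI by (metis in_set_conv_nth)
next
  case False
  then have "i \<in> set (sorted_list_of_set ({0..<n+m} - I))" using assms by simp
  then show ?thesis using lenLC by (metis in_set_conv_nth)
qed

lemma sh_len: "length (shuffle_list I us vs) = length us + length vs"
  by (simp add: shuffle_list_def)

lemma sh_nth_I:
  assumes "length us = m" "length vs = n" "k < m"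
  shows "shuffle_list I us vs ! (sorted_list_of_set I ! k) = us ! k"
proof -
  let ?i = "sorted_list_of_set I ! k"
  have iI: "?i \<in> I" using LI_mem assms by simp
  have "?i < n+m" using iI hI1 by auto
  moreover have "card {j\<in>I. j < ?i} = k" using rank_nth[OF finI] assms hI2 by simp
  moreover have lt: "?i < length us + length vs" using iI hI1 assms by auto
  moreover have "shuffle_list I us vs ! ?i =
     (if ?i \<in> I then us ! card {j\<in>I. j < ?i} else vs ! card {j. j < ?i \<and> j \<notin> I})"
    unfolding shuffle_list_def using lt by (simp only: nth_map length_map length_upt nth_upt) simp
  ultimately show ?thesis using iI by (simp only: if_P)
qed

lemma sh_nth_C:
  assumes "length us = m" "length vs = n" "k < n"
  shows "shuffle_list I us vs ! (sorted_list_of_set ({0..<n+m} - I) ! k) = vs ! k"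
proof -
  let ?C = "{0..<n+m} - I"
  let ?i = "sorted_list_of_set ?C ! k"
  have iC: "?i \<in> ?C" using LC_mem assms by simp
  have "{j. j < ?i \<and> j \<notin> I} = {j\<in>?C. j < ?i}" using iC by auto
  moreover have "card {j\<in>?C. j < ?i} = k" using rank_nth[of ?C k] assms cardC by simp
  ultimately have ck: "card {j. j < ?i \<and> j \<notin> I} = k" by simp
  have lt: "?i < length us + length vs" using iC assms by auto
  have "shuffle_list I us vs ! ?i =
     (if ?i \<in> I then us ! card {j\<in>I. j < ?i} else vs ! card {j. j < ?i \<and> j \<notin> I})"
    unfolding shuffle_list_def using lt by (simp only: nth_map length_map length_upt nth_upt) simp
  also have "\<dots> = vs ! card {j. j < ?i \<and> j \<notin> I}"
    by (rule if_not_P) (use iC in blast)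
  also have "\<dots> = vs ! k" by (simp only: ck)
  finally show ?thesis .
qed

lemma piI_sh: "length us = m \<Longrightarrow> length vs = n \<Longrightarrow> piI I (shuffle_list I us vs) = us"
  by (rule nth_equalityI) (simp_all add: piI_def lenLI hI2 sh_nth_I)

lemma piC_sh: "length us = m \<Longrightarrow> length vs = n \<Longrightarrow> piC I (n+m) (shuffle_list I us vs) = vs"
  by (rule nth_equalityI) (simp_all add: piC_def lenLC cardC sh_nth_C)

lemma sh_pi:
  assumes "length w = n + m"
  shows "shuffle_list I (piI I w) (piC I (n+m) w) = w"
proof (rule nth_equalityI)
  show "length (shuffle_list I (piI I w) (piC I (n+m) w)) = length w" using assms by (simp add: sh_len)
  fix i assume "i < length (shuffle_list I (piI I w) (piC I (n+m) w))"
  then have i: "i < n+m" by (simp add: sh_len)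
  from cover[OF i] show "shuffle_list I (piI I w) (piC I (n+m) w) ! i = w ! i"
  proof
    assume "\<exists>k<m. i = sorted_list_of_set I ! k"
    then obtain k where "k < m" "i = sorted_list_of_set I ! k" by blast
    then show ?thesis using sh_nth_I[OF len_piI[of w] len_piC[of w], of k] lenLI by (simp add: piI_def hI2)
  next
    assume "\<exists>k<n. i = sorted_list_of_set ({0..<n+m} - I) ! k"
    then obtain k where "k < n" "i = sorted_list_of_set ({0..<n+m} - I) ! k" by blast
    then show ?thesis using sh_nth_C[OF len_piI[of w] len_piC[of w], of k] lenLC by (simp add: piC_def cardC)
  qed
qed

lemma LI_lt: assumes "k < m" shows "sorted_list_of_set I ! k < n + m"
  using LI_mem[OF assms] hI1 by auto
lemma LC_lt: "k < n \<Longrightarrow> sorted_list_of_set ({0..<n+m} - I) ! k < n + m"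
  using LC_mem by auto

lemma piI_map2:
  assumes "length p = n+m" "length q = n+m"
  shows "piI I (map2 g p q) = map2 g (piI I p) (piI I q)"
  by (rule nth_equalityI) (simp_all add: piI_def lenLI hI2 LI_lt assms)

lemma piC_map2:
  assumes "length p = n+m" "length q = n+m"
  shows "piC I (n+m) (map2 g p q) = map2 g (piC I (n+m) p) (piC I (n+m) q)"
  by (rule nth_equalityI) (simp_all add: piC_def lenLC cardC LC_lt assms)

lemma map2_split:
  assumes "length p = n+m" "length q = n+m" "length w = n+m"
  shows "map2 g p q = w \<longleftrightarrow>
     map2 g (piI I p) (piI I q) = piI I w \<and> map2 g (piC I (n+m) p) (piC I (n+m) q) = piC I (n+m) w"
proof
  assume "map2 g p q = w"
  then show "map2 g (piI I p) (piI I q) = piI I w \<and> map2 g (piC I (n+m) p) (piC I (n+m) q) = piC I (n+m) w"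
    using piI_map2 piC_map2 assms by metis
next
  assume h: "map2 g (piI I p) (piI I q) = piI I w \<and> map2 g (piC I (n+m) p) (piC I (n+m) q) = piC I (n+m) w"
  show "map2 g p q = w"
  proof (rule nth_equalityI)
    show "length (map2 g p q) = length w" using assms by simp
    fix i assume "i < length (map2 g p q)"
    then have i: "i < n+m" using assms by simp
    from cover[OF i] show "map2 g p q ! i = w ! i"
    proof
      assume "\<exists>k<m. i = sorted_list_of_set I ! k"
      then obtain k where k: "k < m" "i = sorted_list_of_set I ! k" by blast
      have "map2 g (piI I p) (piI I q) ! k = piI I w ! k" using h by simp
      then show ?thesis using k i assms by (simp add: piI_def lenLI hI2)
    next
      assume "\<exists>k<n. i = sorted_list_of_set ({0..<n+m} - I) ! k"
      then obtain k where k: "k < n" "i = sorted_list_of_set ({0..<n+m} - I) ! k" by blast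
      have "map2 g (piC I (n+m) p) (piC I (n+m) q) ! k = piC I (n+m) w ! k" using h by simp
      then show ?thesis using k i assms by (simp add: piC_def lenLC cardC)
    qed
  qed
qed

lemma pi_basis:
  assumes "w \<in> basisA r d (n+m)"
  shows "piI I w \<in> basisA r d m" "piC I (n+m) w \<in> basisA r d n"
proof -
  have lw: "length w = n+m" and sw: "set w \<subseteq> monomials_deg r d" using assms by (auto simp: basisA_def)
  have "set (piI I w) \<subseteq> set w" using lw hI1 finI by (auto simp: piI_def intro!: nth_mem)
  then show "piI I w \<in> basisA r d m" using sw by (auto simp: basisA_def)
  have "set (piC I (n+m) w) \<subseteq> set w" using lw by (auto simp: piC_def intro!: nth_mem)
  then show "piC I (n+m) w \<in> basisA r d n" using sw by (auto simp: basisA_def)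
qed

lemma sh_basis:
  assumes "us \<in> basisA r d m" "vs \<in> basisA r d n"
  shows "shuffle_list I us vs \<in> basisA r d (n+m)"
proof -
  have lu: "length us = m" and lv: "length vs = n" using assms by (auto simp: basisA_def)
  let ?w = "shuffle_list I us vs"
  have lw: "length ?w = n+m" using lu lv by (simp add: sh_len)
  have "?w ! i \<in> monomials_deg r d" if i: "i < n+m" for i
    using cover[OF i]
  proof
    assume "\<exists>k<m. i = sorted_list_of_set I ! k"
    then obtain k where k: "k < m" "i = sorted_list_of_set I ! k" by blast
    then show ?thesis using sh_nth_I[OF lu lv k(1)] assms lu by (auto simp: basisA_def)
  next
    assume "\<exists>k<n. i = sorted_list_of_set ({0..<n+m} - I) ! k"
    then obtain k where k: "k < n" "i = sorted_list_of_set ({0..<n+m} - I) ! k" by blast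
    then show ?thesis using sh_nth_C[OF lu lv k(1)] assms lv by (auto simp: basisA_def)
  qed
  then show ?thesis using lw by (auto simp: basisA_def in_set_conv_nth)
qed

lemma shuffleA_eq:
  "shuffleA r d m n I x y w = (if w \<in> basisA r d (n+m) then x (piI I w) * y (piC I (n+m) w) else 0)"
proof -
  have "{(us, vs). us \<in> basisA r d m \<and> vs \<in> basisA r d n \<and> shuffle_list I us vs = w}
     = (if w \<in> basisA r d (n+m) then {(piI I w, piC I (n+m) w)} else {})"
  proof (cases "w \<in> basisA r d (n+m)")
    case True
    have lw: "length w = n+m" using True by (simp add: basisA_def)
    show ?thesis
    proof (simp only: True if_True, intro equalityI subsetI)
      fix x assume "x \<in> {(us, vs). us \<in> basisA r d m \<and> vs \<in> basisA r d n \<and> shuffle_list I us vs = w}"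
      then obtain us vs where x: "x = (us, vs)" "us \<in> basisA r d m" "vs \<in> basisA r d n" "shuffle_list I us vs = w"
        by blast
      have l: "length us = m" "length vs = n" using x by (auto simp: basisA_def)
      have "piI I w = us" "piC I (n+m) w = vs" using piI_sh[OF l] piC_sh[OF l] x(4) by auto
      then show "x \<in> {(piI I w, piC I (n+m) w)}" using x(1) by auto
    next
      fix x assume "x \<in> {(piI I w, piC I (n+m) w)}"
      then show "x \<in> {(us, vs). us \<in> basisA r d m \<and> vs \<in> basisA r d n \<and> shuffle_list I us vs = w}"
        using pi_basis[OF True] sh_pi[OF lw] by auto
    qed
  next
    case False
    then show ?thesis using sh_basis by auto
  qed
  then show ?thesis by (simp add: shuffleA_def)
qed

end


lemma mono_add:
  assumes "\<alpha> \<in> monomials_deg r e" "\<beta> \<in> monomials_deg r d"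
  shows "(\<lambda>i. \<alpha> i + \<beta> i) \<in> monomials_deg r (e + d)"
  using assms by (simp add: monomials_deg_def sum.distrib)

lemma padd_basis:
  assumes "us \<in> basisA r e k" "vs \<in> basisA r d k"
  shows "map2 (\<lambda>u v i. u i + v i) us vs \<in> basisA r (e + d) k"
proof -
  have l: "length us = k" "length vs = k" using assms by (auto simp: basisA_def)
  have "x \<in> monomials_deg r (e + d)" if "x \<in> set (map2 (\<lambda>u v i. u i + v i) us vs)" for x
  proof -
    from that obtain j where j: "j < k" "x = (\<lambda>i. (us ! j) i + (vs ! j) i)"
      using l by (auto simp: in_set_conv_nth)
    have "us ! j \<in> monomials_deg r e" "vs ! j \<in> monomials_deg r d"
      using assms j l by (auto simp: basisA_def intro!: subsetD[OF _ nth_mem])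
    then show ?thesis using j mono_add by simp
  qed
  then show ?thesis using l by (auto simp: basisA_def)
qed

definition delta :: "(nat \<Rightarrow> nat) list \<Rightarrow> (nat \<Rightarrow> nat) list \<Rightarrow> 'k::comm_ring_1" where
  "delta u = (\<lambda>x. if x = u then 1 else 0)"

lemma star_delta:
  "starA r e d (delta u) y v =
    (if u \<in> basisA r e (length v)
     then (\<Sum>vs \<in> {vs \<in> basisA r d (length v). map2 (\<lambda>u v i. u i + v i) u vs = v}. y vs) else 0)"
proof -
  let ?S = "{(us, vs). us \<in> basisA r e (length v) \<and> vs \<in> basisA r d (length v) \<and>
        map2 (\<lambda>u v i. u i + v i) us vs = v}"
  let ?V = "{vs \<in> basisA r d (length v). map2 (\<lambda>u v i. u i + v i) u vs = v}"
  have fin: "finite ?S"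
    by (rule finite_subset[of _ "basisA r e (length v) \<times> basisA r d (length v)"])
       (auto simp: finite_basisA)
  have "starA r e d (delta u) y v = (\<Sum>x\<in>?S. if fst x = u then y (snd x) else 0)"
    unfolding starA_def delta_def by (intro sum.cong) auto
  also have "\<dots> = sum (\<lambda>x. y (snd x)) {x\<in>?S. fst x = u}"
    by (rule sum.inter_filter[OF fin, symmetric])
  also have "{x\<in>?S. fst x = u} = (if u \<in> basisA r e (length v) then (\<lambda>vs. (u, vs)) ` ?V else {})"
    by auto
  also have "sum (\<lambda>x. y (snd x)) \<dots> =
      (if u \<in> basisA r e (length v) then (\<Sum>vs \<in> ?V. y vs) else 0)"
    by (simp add: sum.reindex inj_on_def)
  finally show ?thesis .
qed

theorem lemma2p1:
  fixes r d e n m :: nat and I :: "nat set"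
    and f b a :: "(nat \<Rightarrow> nat) list \<Rightarrow> 'k::comm_ring_1"
  assumes "noetherian_cring TYPE('k)"
    and "r > 0"
    and "f \<in> Aspace r d n" and "b \<in> Aspace r d m" and "a \<in> Aspace r e (n + m)"
    and "I \<subseteq> {0..<n + m}" and "card I = m"
  shows "\<exists>(s::nat) (g :: nat \<Rightarrow> (nat \<Rightarrow> nat) list \<Rightarrow> 'k) h.
           (\<forall>i<s. g i \<in> Aspace r e n \<and> h i \<in> Aspace r (d + e) m) \<and>
           (\<forall>w. starA r e d a (shuffleA r d m n I b f) w =
                (\<Sum>i<s. shuffleA r (d + e) m n I (h i) (starA r e d (g i) f) w))"
proof -
  note hI = assms(6,7)
  let ?N = "n + m"
  let ?pI = "piI I"
  let ?pC = "piC I ?N"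
  let ?add = "map2 (\<lambda>u v i. u i + v i) :: (nat \<Rightarrow> nat) list \<Rightarrow> _"
  define P where "P = basisA r e ?N"
  obtain ps where ps: "distinct ps" "set ps = P"
    using finite_distinct_list[OF finite_basisA[of r e ?N]] P_def by blast
  define s where "s = length ps"
  define g :: "nat \<Rightarrow> (nat \<Rightarrow> nat) list \<Rightarrow> 'k" where "g i = delta (?pC (ps ! i))" for i
  define h :: "nat \<Rightarrow> (nat \<Rightarrow> nat) list \<Rightarrow> 'k"
    where "h i = (\<lambda>u. a (ps ! i) * starA r e d (delta (?pI (ps ! i))) b u)" for i
  have psP: "ps ! i \<in> P" if "i < s" for i using that ps s_def by (metis nth_mem)
  have memb: "\<forall>i<s. g i \<in> Aspace r e n \<and> h i \<in> Aspace r (d + e) m"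
  proof (intro allI impI conjI)
    fix i assume i: "i < s"
    have pb: "?pI (ps ! i) \<in> basisA r e m" "?pC (ps ! i) \<in> basisA r e n"
      using pi_basis[OF hI] psP[OF i] P_def by auto
    show "g i \<in> Aspace r e n" using pb by (auto simp: Aspace_def g_def delta_def)
    show "h i \<in> Aspace r (d + e) m"
      unfolding Aspace_def
    proof (intro CollectI allI impI)
      fix u assume u: "u \<notin> basisA r (d + e) m"
      have "starA r e d (delta (?pI (ps ! i))) b u = 0"
      proof (cases "?pI (ps ! i) \<in> basisA r e (length u)")
        case True
        have "length (?pI (ps ! i)) = length u" using True by (simp add: basisA_def)
        then have lu: "length u = m" using len_piI[OF hI, of "ps ! i"] by linarith
        have E: "{vs \<in> basisA r d (length u). ?add (?pI (ps ! i)) vs = u} = {}"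
        proof (rule ccontr)
          assume "{vs \<in> basisA r d (length u). ?add (?pI (ps ! i)) vs = u} \<noteq> {}"
          then obtain vs where vs: "vs \<in> basisA r d (length u)" "?add (?pI (ps ! i)) vs = u" by blast
          have "u \<in> basisA r (e + d) (length u)" using padd_basis[OF True vs(1)] vs(2) by simp
          then show False using u lu by (simp add: add.commute)
        qed
        show ?thesis unfolding star_delta E using True by simp
      next
        case False then show ?thesis by (simp add: star_delta)
      qed
      then show "h i u = 0" by (simp add: h_def)
    qed
  qed
  have ident: "starA r e d a (shuffleA r d m n I b f) w =
                (\<Sum>i<s. shuffleA r (d + e) m n I (h i) (starA r e d (g i) f) w)" for w
  proof (cases "w \<in> basisA r (d + e) ?N")
    case False
    have "starA r e d a (shuffleA r d m n I b f) w = 0"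
      unfolding starA_def
    proof (intro sum.neutral ballI)
      fix x assume x: "x \<in> {(us, vs). us \<in> basisA r e (length w) \<and> vs \<in> basisA r d (length w) \<and>
          ?add us vs = w}"
      obtain p q where pq: "x = (p, q)" "p \<in> basisA r e (length w)" "q \<in> basisA r d (length w)" "?add p q = w"
        using x by blast
      have "a p = 0"
      proof (rule ccontr)
        assume "a p \<noteq> 0"
        then have "p \<in> basisA r e ?N" using assms(5) by (auto simp: Aspace_def)
        then have "length w = ?N" using pq by (auto simp: basisA_def)
        then have "w \<in> basisA r (e + d) ?N" using padd_basis[OF pq(2,3)] pq(4) by simp
        then show False using False by (simp add: add.commute)
      qed
      then show "(case x of (us, vs) \<Rightarrow> a us * shuffleA r d m n I b f vs) = 0" using pq by simp
    qed
    moreover have "(\<Sum>i<s. shuffleA r (d + e) m n I (h i) (starA r e d (g i) f) w) = 0"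
      using False by (simp add: shuffleA_eq[OF hI])
    ultimately show ?thesis by simp
  next
    case True
    have lw: "length w = ?N" using True by (simp add: basisA_def)
    define Q where "Q p = {q \<in> basisA r d ?N. ?add p q = w}" for p
    define V where "V p = {vs \<in> basisA r d m. ?add (?pI p) vs = ?pI w}" for p
    define Y where "Y p = {ys \<in> basisA r d n. ?add (?pC p) ys = ?pC w}" for p
    have finP: "finite P" by (simp add: P_def finite_basisA)
    have finQ: "finite (Q p)" for p by (simp add: Q_def finite_basisA)
    have finV: "finite (V p)" for p by (simp add: V_def finite_basisA)
    have finY: "finite (Y p)" for p by (simp add: Y_def finite_basisA)
    have "starA r e d a (shuffleA r d m n I b f) w =
        (\<Sum>x \<in> Sigma P Q. a (fst x) * (b (?pI (snd x)) * f (?pC (snd x))))"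
      unfolding starA_def lw
    proof (rule sum.cong)
      show "{(us, vs). us \<in> basisA r e ?N \<and> vs \<in> basisA r d ?N \<and> ?add us vs = w} = Sigma P Q"
        by (auto simp: P_def Q_def)
    qed (auto simp: shuffleA_eq[OF hI] Q_def)
    also have "\<dots> = (\<Sum>p\<in>P. \<Sum>q\<in>Q p. a p * (b (?pI q) * f (?pC q)))"
      by (subst sum.Sigma[OF finP]) (auto simp: finQ split_def)
    also have "\<dots> = (\<Sum>p\<in>P. a p * ((\<Sum>vs\<in>V p. b vs) * (\<Sum>ys\<in>Y p. f ys)))"
    proof (rule sum.cong[OF refl])
      fix p assume p: "p \<in> P"
      have lp: "length p = ?N" using p by (simp add: P_def basisA_def)
      have "(\<Sum>vs\<in>V p. b vs) * (\<Sum>ys\<in>Y p. f ys) = (\<Sum>x\<in>V p \<times> Y p. b (fst x) * f (snd x))"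
        by (simp add: sum_product sum.cartesian_product split_def)
      also have "\<dots> = (\<Sum>q\<in>Q p. b (?pI q) * f (?pC q))"
      proof (rule sym, rule sum.reindex_bij_witness[where i = "\<lambda>x. shuffle_list I (fst x) (snd x)"
            and j = "\<lambda>q. (?pI q, ?pC q)"])
        fix q assume q: "q \<in> Q p"
        have qb: "q \<in> basisA r d ?N" and qw: "?add p q = w" using q by (auto simp: Q_def)
        have lq: "length q = ?N" using qb by (simp add: basisA_def)
        show "shuffle_list I (fst (?pI q, ?pC q)) (snd (?pI q, ?pC q)) = q"
          using sh_pi[OF hI lq] by simp
        have "?add (?pI p) (?pI q) = ?pI w \<and> ?add (?pC p) (?pC q) = ?pC w"
          using map2_split[OF hI lp lq lw] qw by blast
        then show "(?pI q, ?pC q) \<in> V p \<times> Y p"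
          using pi_basis[OF hI qb] by (simp add: V_def Y_def)
        show "b (fst (?pI q, ?pC q)) * f (snd (?pI q, ?pC q)) = b (?pI q) * f (?pC q)" by simp
      next
        fix x assume x: "x \<in> V p \<times> Y p"
        obtain vs ys where xv: "x = (vs, ys)" "vs \<in> V p" "ys \<in> Y p" using x by blast
        have vb: "vs \<in> basisA r d m" and yb: "ys \<in> basisA r d n"
          and ve: "?add (?pI p) vs = ?pI w" and ye: "?add (?pC p) ys = ?pC w"
          using xv by (auto simp: V_def Y_def)
        have l: "length vs = m" "length ys = n" using vb yb by (auto simp: basisA_def)
        have e1: "?pI (shuffle_list I vs ys) = vs" "?pC (shuffle_list I vs ys) = ys"
          using piI_sh[OF hI l] piC_sh[OF hI l] by auto
        show "(?pI (shuffle_list I (fst x) (snd x)), ?pC (shuffle_list I (fst x) (snd x))) = x"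
          using xv e1 by simp
        have sb: "shuffle_list I vs ys \<in> basisA r d ?N" by (rule sh_basis[OF hI vb yb])
        have ls: "length (shuffle_list I vs ys) = ?N" using sb by (simp add: basisA_def)
        have "?add p (shuffle_list I vs ys) = w"
          using map2_split[OF hI lp ls lw] e1 ve ye by simp
        then show "shuffle_list I (fst x) (snd x) \<in> Q p" using sb xv by (simp add: Q_def)
      qed
      finally show "(\<Sum>q\<in>Q p. a p * (b (?pI q) * f (?pC q))) =
          a p * ((\<Sum>vs\<in>V p. b vs) * (\<Sum>ys\<in>Y p. f ys))"
        by (simp add: sum_distrib_left)
    qed
    also have "\<dots> = (\<Sum>p\<in>P. a p * starA r e d (delta (?pI p)) b (?pI w) *
                                  starA r e d (delta (?pC p)) f (?pC w))"
    proof (rule sum.cong[OF refl])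
      fix p assume p: "p \<in> P"
      have pb: "?pI p \<in> basisA r e m" "?pC p \<in> basisA r e n"
        using pi_basis[OF hI] p P_def by auto
      show "a p * ((\<Sum>vs\<in>V p. b vs) * (\<Sum>ys\<in>Y p. f ys)) =
          a p * starA r e d (delta (?pI p)) b (?pI w) * starA r e d (delta (?pC p)) f (?pC w)"
        using pb by (simp add: star_delta V_def Y_def mult.assoc len_piI[OF hI] len_piC[OF hI])
    qed
    also have "\<dots> = (\<Sum>i<s. shuffleA r (d + e) m n I (h i) (starA r e d (g i) f) w)"
    proof -
      define G where "G p = a p * starA r e d (delta (?pI p)) b (?pI w) *
                                  starA r e d (delta (?pC p)) f (?pC w)" for p
      have "(\<Sum>i<s. shuffleA r (d + e) m n I (h i) (starA r e d (g i) f) w) = (\<Sum>i<length ps. G (ps ! i))"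
        unfolding s_def by (rule sum.cong[OF refl]) (simp add: shuffleA_eq[OF hI] True h_def g_def G_def)
      also have "\<dots> = (\<Sum>p\<in>P. G p)" using sum_nth_distinct[OF ps(1), of G] ps(2) by simp
      finally show ?thesis by (simp add: G_def)
    qed
    finally show ?thesis .
  qed
  show ?thesis using memb ident by blast
qed

end
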